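(* For every ultimately periodic trace $\pi$, $\mathrm{cct}(\pi)$ is a complete consistent theory of LTL, and the map $\mathrm{cct}:\mathrm{UP}\to\mathrm{CCT}_{LTL}$ is a bijection.
   Context: Fix a finite nonempty $AP$. LTL formulae: $\varphi::=\bot\mid p\mid\neg\varphi\mid\varphi\lor\varphi\mid X\varphi\mid\varphi U\varphi$. Traces $\pi=a_0a_1\dots$ ($a_i\subseteq AP$), $\pi^i=a_ia_{i+1}\dots$; $\pi\models p$ iff $p\in a_0$, $\pi\models X\varphi$ iff $\pi^1\models\varphi$, $\pi\models\varphi U\psi$ iff $\exists i\ge0$: $\pi^i\models\psi$ and $\forall j<i$: $\pi^j\models\varphi$; $\bot,\neg,\lor$ as usual. Kripke structure $M=(S,I,T,\lambda)$: finite $S$, nonempty $I\subseteq S$, left-total $T\subseteq S\times S$, $\lambda:S\to2^{AP}$; traces of $M$: $\lambda(s_0)\lambda(s_1)\dots$ with $s_0\in I$, $(s_i,s_{i+1})\in T$. $M\models\varphi$ iff all its traces satisfy $\varphi$. $\mathrm{Cn}_{LTL}(X)$ = formulae satisfied by every Kripke structure satisfying $X$. Theory: $K=\mathrm{Cn}_{LTL}(K)$; consistent: $K$ is not the set of all formulae; complete: $\varphi\in K$ or $\neg\varphi\in K$ for every $\varphi$; $\mathrm{CCT}_{LTL}$ is the set of complete consistent LTL theories. $\mathrm{UP}$ is the set of ultimately periodic traces $\rho\sigma^\omega$ ($\rho,\sigma$ finite, $\sigma$ nonempty); $\mathrm{cct}(\pi):=\{\varphi\mid\pi\models\varphi\}$.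 *)

theory Defs
  imports Main
begin

datatype 'ap ltl = Bot | Prop 'ap | Neg "'ap ltl" | Or "'ap ltl" "'ap ltl"
  | Next "'ap ltl" | Until "'ap ltl" "'ap ltl"

type_synonym 'ap trace = "nat \<Rightarrow> 'ap set"

definition suffix :: "nat \<Rightarrow> 'ap trace \<Rightarrow> 'ap trace" where
  "suffix i \<pi> = (\<lambda>n. \<pi> (n + i))"

fun sat :: "'ap trace \<Rightarrow> 'ap ltl \<Rightarrow> bool" where
  "sat \<pi> Bot = False"
| "sat \<pi> (Prop p) = (p \<in> \<pi> 0)"
| "sat \<pi> (Neg \<phi>) = (\<not> sat \<pi> \<phi>)"
| "sat \<pi> (Or \<phi> \<psi>) = (sat \<pi> \<phi> \<or> sat \<pi> \<psi>)"
| "sat \<pi> (Next \<phi>) = sat (suffix 1 \<pi>) \<phi>"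
| "sat \<pi> (Until \<phi> \<psi>) =
     (\<exists>i. sat (suffix i \<pi>) \<psi> \<and> (\<forall>j<i. sat (suffix j \<pi>) \<phi>))"

text \<open>Kripke structures (S, I, T, lambda); states are natural numbers, which
  covers every finite Kripke structure up to isomorphism.\<close>
type_synonym 'ap kripke = "nat set \<times> nat set \<times> (nat \<times> nat) set \<times> (nat \<Rightarrow> 'ap set)"

definition is_kripke :: "'ap kripke \<Rightarrow> bool" where
  "is_kripke M = (case M of (S, I, T, lab) \<Rightarrow>
     finite S \<and> I \<noteq> {} \<and> I \<subseteq> S \<and> T \<subseteq> S \<times> S \<and> (\<forall>s\<in>S. \<exists>t. (s, t) \<in> T))"

definition traces :: "'ap kripke \<Rightarrow> 'ap trace set" where
  "traces M = (case M of (S, I, T, lab) \<Rightarrow>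
     {\<pi>. \<exists>s::nat \<Rightarrow> nat. s 0 \<in> I \<and> (\<forall>i. (s i, s (Suc i)) \<in> T) \<and> \<pi> = (\<lambda>i. lab (s i))})"

definition kmodels :: "'ap kripke \<Rightarrow> 'ap ltl \<Rightarrow> bool" where
  "kmodels M \<phi> = (\<forall>\<pi>\<in>traces M. sat \<pi> \<phi>)"

definition Cn :: "'ap ltl set \<Rightarrow> 'ap ltl set" where
  "Cn X = {\<phi>. \<forall>M. is_kripke M \<longrightarrow> (\<forall>\<psi>\<in>X. kmodels M \<psi>) \<longrightarrow> kmodels M \<phi>}"

definition is_theory :: "'ap ltl set \<Rightarrow> bool" where
  "is_theory K = (K = Cn K)"

definition consistent :: "'ap ltl set \<Rightarrow> bool" where
  "consistent K = (K \<noteq> UNIV)"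

definition complete :: "'ap ltl set \<Rightarrow> bool" where
  "complete K = (\<forall>\<phi>. \<phi> \<in> K \<or> Neg \<phi> \<in> K)"

definition CCT :: "'ap ltl set set" where
  "CCT = {K. is_theory K \<and> consistent K \<and> complete K}"

definition UP :: "'ap trace set" where
  "UP = {\<pi>. \<exists>\<rho> \<sigma>. \<sigma> \<noteq> [] \<and>
     \<pi> = (\<lambda>i. if i < length \<rho> then \<rho> ! i else \<sigma> ! ((i - length \<rho>) mod length \<sigma>))}"

definition cct :: "'ap trace \<Rightarrow> 'ap ltl set" where
  "cct \<pi> = {\<phi>. sat \<pi> \<phi>}"

end

theory Submission
  imports Defs
begin

lemma sat_nexts: "sat \<pi> ((Next ^^ i) \<phi>) = sat (suffix i \<pi>) \<phi>"
proof (induction i arbitrary: \<pi>)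
  case 0
  then show ?case by (simp add: suffix_def)
next
  case (Suc i)
  have "suffix i (suffix 1 \<pi>) = suffix (Suc i) \<pi>" by (simp add: suffix_def add.commute)
  then show ?case using Suc by simp
qed

lemma distinguish:
  assumes "\<pi> \<noteq> \<pi>'" shows "\<exists>\<phi>. sat \<pi> \<phi> \<and> \<not> sat \<pi>' \<phi>"
proof -
  obtain i where i: "\<pi> i \<noteq> \<pi>' i" using assms by blast
  then obtain p where "p \<in> \<pi> i \<and> p \<notin> \<pi>' i \<or> p \<in> \<pi>' i \<and> p \<notin> \<pi> i" by blast
  then show ?thesis
  proof
    assume "p \<in> \<pi> i \<and> p \<notin> \<pi>' i"
    then show ?thesis
      by (intro exI[of _ "(Next ^^ i) (Prop p)"]) (simp add: sat_nexts suffix_def)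
  next
    assume "p \<in> \<pi>' i \<and> p \<notin> \<pi> i"
    then show ?thesis
      by (intro exI[of _ "Neg ((Next ^^ i) (Prop p))"]) (simp add: sat_nexts suffix_def)
  qed
qed

lemma cct_inj: "cct \<pi> = cct \<pi>' \<Longrightarrow> \<pi> = \<pi>'"
  using distinguish[of \<pi> \<pi>'] unfolding cct_def by blast

lemma Cn_sup: "X \<subseteq> Cn X"
  unfolding Cn_def by blast

lemma single_trace_CCT:
  assumes "is_kripke M" "\<pi> \<in> traces M" "\<And>\<pi>'. \<pi>' \<in> traces M \<Longrightarrow> \<pi>' = \<pi>"
  shows "cct \<pi> \<in> CCT"
proof -
  have "Cn (cct \<pi>) \<subseteq> cct \<pi>"
  proof
    fix \<phi> assume "\<phi> \<in> Cn (cct \<pi>)"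
    moreover have "\<forall>\<psi>\<in>cct \<pi>. kmodels M \<psi>"
      using assms(3) unfolding kmodels_def cct_def by auto
    ultimately have "kmodels M \<phi>" using assms(1) unfolding Cn_def by blast
    then show "\<phi> \<in> cct \<pi>" using assms(2) unfolding kmodels_def cct_def by blast
  qed
  then have "is_theory (cct \<pi>)" using Cn_sup unfolding is_theory_def by blast
  moreover have "consistent (cct \<pi>)"
    unfolding consistent_def cct_def by (metis UNIV_I mem_Collect_eq sat.simps(1))
  moreover have "complete (cct \<pi>)" unfolding complete_def cct_def by simp
  ultimately show ?thesis unfolding CCT_def by blast
qed

lemma UP_kripke:
  assumes "\<pi> \<in> UP"
  shows "\<exists>M. is_kripke M \<and> \<pi> \<in> traces M \<and> (\<forall>\<pi>'\<in>traces M. \<pi>' = \<pi>)"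
proof -
  obtain \<rho> \<sigma> where ne: "\<sigma> \<noteq> []" and
    pi: "\<pi> = (\<lambda>i. if i < length \<rho> then \<rho> ! i else \<sigma> ! ((i - length \<rho>) mod length \<sigma>))"
    using assms unfolding UP_def by blast
  define n where "n = length \<rho>"
  define p where "p = length \<sigma>"
  have p: "p > 0" using ne p_def by simp
  define nx where "nx k = (if Suc k < n + p then Suc k else n)" for k
  define f where "f i = (if i < n then i else n + (i - n) mod p)" for i
  define T where "T = {(k, nx k) | k. k < n + p}"
  define M where "M = ({..<n+p}, {0::nat}, T, \<pi>)"
  have f0: "f 0 = 0" using p by (simp add: f_def)
  have fS: "f (Suc i) = nx (f i)" for i
  proof (cases "Suc i < n")
    case True then show ?thesis by (simp add: f_def nx_def)
  next
    case False
    show ?thesis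
    proof (cases "Suc i = n")
      case True then show ?thesis using p by (simp add: f_def nx_def)
    next
      case False2: False
      with False have ge: "i \<ge> n" by simp
      have "Suc i - n = Suc (i - n)" using ge by simp
      moreover have "(i - n) mod p < p" using p by simp
      moreover have "Suc ((i - n) mod p) \<noteq> p \<Longrightarrow> Suc ((i - n) mod p) < p"
        using \<open>(i - n) mod p < p\<close> by linarith
      ultimately show ?thesis using ge p
        by (auto simp add: f_def nx_def mod_Suc)
    qed
  qed
  have flt: "f i < n + p" for i using p by (simp add: f_def)
  have pf: "\<pi> (f i) = \<pi> i" for i
    using p by (simp add: pi f_def n_def[symmetric] p_def[symmetric])
  have kr: "is_kripke M"
    unfolding is_kripke_def M_def T_def using p by (auto simp: nx_def)
  have tr: "\<pi> \<in> traces M"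
    unfolding traces_def M_def T_def
    by (auto intro!: exI[of _ f] simp: f0 fS flt pf)
  have uniq: "\<pi>' = \<pi>" if tm: "\<pi>' \<in> traces M" for \<pi>'
  proof -
    obtain s where s0: "s 0 = 0" and st: "\<forall>i. (s i, s (Suc i)) \<in> T"
      and ps: "\<pi>' = (\<lambda>i. \<pi> (s i))"
  proof -
      have "\<exists>s. s 0 = 0 \<and> (\<forall>i. (s i, s (Suc i)) \<in> T) \<and> \<pi>' = (\<lambda>i. \<pi> (s i))"
        using tm unfolding traces_def M_def by simp
      then show thesis using that by blast
    qed
    have "s i = f i" for i
    proof (induction i)
      case 0 then show ?case using s0 f0 by simp
    next
      case (Suc i)
      have "s (Suc i) = nx (s i)" using st unfolding T_def by auto
      then show ?case using Suc fS by simp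
    qed
    then show ?thesis using ps pf by auto
  qed
  show ?thesis using kr tr uniq by blast
qed

lemma kripke_UP_trace:
  assumes "is_kripke M"
  shows "\<exists>\<pi>\<in>traces M. \<pi> \<in> UP"
proof -
  obtain S I T lab where M: "M = (S, I, T, lab)" by (cases M) auto
  have fin: "finite S" and IS: "I \<noteq> {}" "I \<subseteq> S" and TS: "T \<subseteq> S \<times> S"
    and tot: "\<forall>x\<in>S. \<exists>y. (x, y) \<in> T"
    using assms unfolding M is_kripke_def by auto
  obtain i0 where i0: "i0 \<in> I" using IS by blast
  obtain g where g: "\<forall>x\<in>S. (x, g x) \<in> T" using tot by metis
  define s where "s k = (g ^^ k) i0" for k
  have sS: "s k \<in> S" for k
    by (induction k) (use i0 IS g TS in \<open>auto simp: s_def\<close>)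
  have sT: "(s k, s (Suc k)) \<in> T" for k using g sS by (simp add: s_def)
  have "range s \<subseteq> S" using sS by auto
  then have "finite (range s)" using fin finite_subset by blast
  then have "\<not> inj s" using finite_imageD by fastforce
  then obtain a b where ab: "a < b" "s a = s b"
    unfolding inj_def by (metis linorder_neqE_nat)
  define p where "p = b - a"
  have p: "p > 0" using ab p_def by simp
  define s' where "s' k = (if k < a then s k else s (a + (k - a) mod p))" for k
  have s'0: "s' 0 = s 0" by (simp add: s'_def)
  have s'T: "(s' k, s' (Suc k)) \<in> T" for k
  proof (cases "Suc k < a")
    case True then show ?thesis using sT by (simp add: s'_def)
  next
    case False
    show ?thesis
    proof (cases "Suc k = a")
      case True then show ?thesis using sT[of k] by (simp add: s'_def)
    next
      case False2: False
      with False have ge: "k \<ge> a" by simp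
      define m where "m = (k - a) mod p"
      have mp: "m < p" using p m_def by simp
      have e1: "s' k = s (a + m)" using ge by (simp add: s'_def m_def)
      have "Suc k - a = Suc (k - a)" using ge by simp
      then have e2: "s' (Suc k) = s (a + (if Suc m = p then 0 else Suc m))"
        using ge by (simp add: s'_def m_def mod_Suc)
      show ?thesis
      proof (cases "Suc m = p")
        case True
        then have "Suc (a + m) = b" using ab p_def by simp
        then have "s' (Suc k) = s (Suc (a + m))" using e2 ab True by simp
        then show ?thesis using e1 sT by simp
      next
        case False
        then show ?thesis using e1 e2 sT by simp
      qed
    qed
  qed
  define \<tau> where "\<tau> = (\<lambda>k. lab (s' k))"
  have "\<tau> \<in> traces M"
    unfolding M traces_def \<tau>_def using s'0 s'T i0 by (auto simp: s_def)
  moreover have "\<tau> \<in> UP"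
  proof -
    define \<rho> where "\<rho> = map (\<lambda>k. lab (s k)) [0..<a]"
    define \<sigma> where "\<sigma> = map (\<lambda>k. lab (s (a + k))) [0..<p]"
    have "\<tau> = (\<lambda>i. if i < length \<rho> then \<rho> ! i else \<sigma> ! ((i - length \<rho>) mod length \<sigma>))"
    proof
      fix i
      have l: "length \<rho> = a" "length \<sigma> = p" by (simp_all add: \<rho>_def \<sigma>_def)
      show "\<tau> i = (if i < length \<rho> then \<rho> ! i else \<sigma> ! ((i - length \<rho>) mod length \<sigma>))"
      proof (cases "i < a")
        case True then show ?thesis using l by (simp add: \<tau>_def s'_def \<rho>_def)
      next
        case False
        have "(i - a) mod p < p" using p by simp
        then show ?thesis using l False by (simp add: \<tau>_def s'_def \<sigma>_def)
      qed
    qed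
    moreover have "\<sigma> \<noteq> []" using p by (simp add: \<sigma>_def)
    ultimately show ?thesis unfolding UP_def by blast
  qed
  ultimately show ?thesis by blast
qed

lemma surj_CCT:
  assumes "K \<in> CCT" shows "\<exists>\<pi>\<in>UP. cct \<pi> = K"
proof -
  have th: "K = Cn K" and co: "K \<noteq> UNIV" and cp: "\<And>\<phi>. \<phi> \<in> K \<or> Neg \<phi> \<in> K"
    using assms unfolding CCT_def is_theory_def consistent_def complete_def by auto
  obtain \<phi> where "\<phi> \<notin> Cn K" using co th by blast
  then obtain M where M: "is_kripke M" "\<forall>\<psi>\<in>K. kmodels M \<psi>"
    unfolding Cn_def by blast
  obtain \<pi> where pM: "\<pi> \<in> traces M" and pU: "\<pi> \<in> UP" using kripke_UP_trace[OF M(1)] by blast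
  have Kp: "K \<subseteq> cct \<pi>'" if "\<pi>' \<in> traces M" for \<pi>'
    using M(2) that unfolding kmodels_def cct_def by blast
  have "cct \<pi> \<subseteq> K"
  proof
    fix \<psi> assume "\<psi> \<in> cct \<pi>"
    moreover have "Neg \<psi> \<notin> K" using Kp[OF pM] \<open>\<psi> \<in> cct \<pi>\<close> unfolding cct_def by auto
    ultimately show "\<psi> \<in> K" using cp by blast
  qed
  then have "cct \<pi> = K" using Kp[OF pM] by blast
  then show ?thesis using pU by blast
qed

theorem mainTheorem11:
  shows "(\<forall>\<pi>\<in>(UP :: ('ap::finite) trace set). cct \<pi> \<in> CCT)
         \<and> bij_betw (cct :: ('ap::finite) trace \<Rightarrow> 'ap ltl set) UP CCT"
proof -
  have A: "\<forall>\<pi>\<in>(UP :: ('ap::finite) trace set). cct \<pi> \<in> CCT"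
  proof
    fix \<pi> :: "'ap trace" assume "\<pi> \<in> UP"
    then obtain M where "is_kripke M" "\<pi> \<in> traces M" "\<forall>\<pi>'\<in>traces M. \<pi>' = \<pi>"
      using UP_kripke by blast
    then show "cct \<pi> \<in> CCT" using single_trace_CCT by blast
  qed
  have "inj_on (cct :: 'ap trace \<Rightarrow> 'ap ltl set) UP"
    using cct_inj by (metis inj_onI)
  moreover have "cct ` (UP :: 'ap trace set) = CCT"
    using A surj_CCT by blast
  ultimately show ?thesis using A unfolding bij_betw_def by blast
qed

end
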